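(* For $n\ge 1$ let $\bm{N}=(1,1,\ldots,1,-n)\in\mathbb{Z}^{n+1}$ and $c_n:=K_n(\bm{N})$. Then, as $n\to\infty$, \[ \log c_n \;\geq\; \frac{n}{4}\log^2 n - O(n\log n). \] Furthermore, $c_n \geq (n+1)^{n-1}$ for all $n\geq 3000$.
   Context: For an integer $n\ge1$ and $\bm{N}=(N_0,\ldots,N_{n-1},N_n)\in\mathbb{Z}^{n+1}$ with $N_n=-\sum_{i<n}N_i$, the flow polytope $\mathcal{F}_n(\bm{N})$ is the set of $\bm{f}=(f_{ij})_{0\le i<j\le n}\in\mathbb{R}_{\ge0}^{\binom{n+1}{2}}$ such that for each vertex $i\in\{0,\ldots,n\}$, $\sum_{j>i} f_{ij}-\sum_{k<i} f_{ki}=N_i$ (flows on the complete directed acyclic graph on $\{0,\ldots,n\}$ with edges $i\to j$ for $i<j$). $K_n(\bm{N})$ denotes the number of integer points of $\mathcal{F}_n(\bm{N})$ (the Kostant partition function). $\log$ is the natural logarithm. *)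

theory Defs
  imports "HOL-Analysis.Analysis"
begin

text \<open>A flow is a function f :: nat => nat => int, where
  f i j is the flow on edge i -> j; it is required to vanish outside the edge set
  so that flows correspond bijectively to integer points of the flow polytope.\<close>

definition flow_points :: "nat \<Rightarrow> (nat \<Rightarrow> int) \<Rightarrow> (nat \<Rightarrow> nat \<Rightarrow> int) set" where
  "flow_points n N = {f.
      (\<forall>i j. \<not> (i < j \<and> j \<le> n) \<longrightarrow> f i j = 0) \<and>
      (\<forall>i j. i < j \<and> j \<le> n \<longrightarrow> f i j \<ge> 0) \<and>
      (\<forall>i\<le>n. (\<Sum>j\<in>{i<..n}. f i j) - (\<Sum>k<i. f k i) = N i)}"

text \<open>Kostant partition function K_n(N): number of integer points of the flow polytope.
  (Defined for N with N n = - sum of the others.)\<close>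
definition kostant :: "nat \<Rightarrow> (nat \<Rightarrow> int) \<Rightarrow> nat" where
  "kostant n N = card (flow_points n N)"

definition Nvec :: "nat \<Rightarrow> nat \<Rightarrow> int" where
  "Nvec n i = (if i < n then 1 else if i = n then - int n else 0)"

definition c_seq :: "nat \<Rightarrow> nat" where
  "c_seq n = kostant n (Nvec n)"

end

theory Submission
  imports Defs "HOL-Library.FuncSet" "HOL-Real_Asymp.Real_Asymp"
begin

lemma flow_out_bound:
  assumes f: "f \<in> flow_points n (Nvec n)"
  shows "i < n \<Longrightarrow> (\<Sum>j\<in>{i<..n}. f i j) \<le> 2^i"
proof (induction i rule: less_induct)
  case (less i)
  have nn: "\<And>a b. a < b \<and> b \<le> n \<Longrightarrow> f a b \<ge> 0" using f unfolding flow_points_def by blast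
  have cons: "(\<Sum>j\<in>{i<..n}. f i j) - (\<Sum>k<i. f k i) = 1"
    using f less.prems unfolding flow_points_def Nvec_def by auto
  have "\<And>k. k < i \<Longrightarrow> f k i \<le> (\<Sum>j\<in>{k<..n}. f k j)"
    by (rule member_le_sum) (use less.prems nn in auto)
  hence "(\<Sum>k<i. f k i) \<le> (\<Sum>k<i. (\<Sum>j\<in>{k<..n}. f k j))" by (intro sum_mono) auto
  also have "\<dots> \<le> (\<Sum>k<i. 2^k)" using less by (intro sum_mono) auto
  also have "\<dots> = 2^i - 1"
    by (induction i) auto
  finally show ?case using cons by linarith
qed

lemma flow_entry_bound:
  assumes f: "f \<in> flow_points n (Nvec n)"
  shows "0 \<le> f i j \<and> f i j \<le> 2^n"
proof (cases "i < j \<and> j \<le> n")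
  case True
  have nn: "\<And>a b. a < b \<and> b \<le> n \<Longrightarrow> f a b \<ge> 0" using f unfolding flow_points_def by blast
  have "f i j \<le> (\<Sum>j\<in>{i<..n}. f i j)"
    by (rule member_le_sum) (use True nn in auto)
  also have "\<dots> \<le> 2^i" using flow_out_bound[OF f] True by auto
  also have "(2::int)^i \<le> 2^n" using True by (intro power_increasing) auto
  finally show ?thesis using nn True by auto
next
  case False
  then show ?thesis using f unfolding flow_points_def by auto
qed

lemma finite_flow_points: "finite (flow_points n (Nvec n))"
proof -
  define B1 where "B1 = {g::nat\<Rightarrow>int. \<forall>j. (j \<in> {..n} \<longrightarrow> g j \<in> {0..2^n}) \<and> (j \<notin> {..n} \<longrightarrow> g j = 0)}"
  have fB1: "finite B1" unfolding B1_def by (rule finite_set_of_finite_funs) auto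
  have "finite {f. \<forall>i. (i \<in> {..n} \<longrightarrow> f i \<in> B1) \<and> (i \<notin> {..n} \<longrightarrow> f i = (\<lambda>_. 0))}"
    by (rule finite_set_of_finite_funs) (use fB1 in auto)
  moreover have "flow_points n (Nvec n) \<subseteq> {f. \<forall>i. (i \<in> {..n} \<longrightarrow> f i \<in> B1) \<and> (i \<notin> {..n} \<longrightarrow> f i = (\<lambda>_. 0))}"
  proof
    fix f assume f: "f \<in> flow_points n (Nvec n)"
    have z: "\<And>i j. \<not> (i < j \<and> j \<le> n) \<Longrightarrow> f i j = 0" using f unfolding flow_points_def by blast
    show "f \<in> {f. \<forall>i. (i \<in> {..n} \<longrightarrow> f i \<in> B1) \<and> (i \<notin> {..n} \<longrightarrow> f i = (\<lambda>_. 0))}"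
      using flow_entry_bound[OF f] z unfolding B1_def by (auto simp: fun_eq_iff)
  qed
  ultimately show ?thesis by (rule finite_subset[rotated])
qed


definition pc :: "(nat \<Rightarrow> nat set) \<Rightarrow> nat \<Rightarrow> int" where
  "pc g i = int (i+1) - (\<Sum>k\<le>i. int (card (g k \<inter> {i<..})))"

definition flowof :: "nat \<Rightarrow> (nat \<Rightarrow> nat set) \<Rightarrow> nat \<Rightarrow> nat \<Rightarrow> int" where
  "flowof n g i j = (if i < j \<and> j \<le> n then (if j \<in> g i then 1 else 0) + (if j = Suc i then pc g i else 0) else 0)"

lemma sum_ind: "finite A \<Longrightarrow> (\<Sum>j\<in>A. (if j \<in> B then 1 else 0::int)) = int (card (A \<inter> B))"
  by (simp add: sum.If_cases)

lemma pc_0: assumes "\<And>k. g k \<subseteq> {Suc k<..}" shows "pc g 0 = 1 - int (card (g 0))"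
proof -
  have "g 0 \<inter> {0<..} = g 0" using assms[of 0] by auto
  thus ?thesis unfolding pc_def by simp
qed

lemma pc_Suc:
  assumes sub: "\<And>k. g k \<subseteq> {Suc k<..}" and fin: "\<And>k. finite (g k)"
  shows "pc g (Suc m) = pc g m + 1 + (\<Sum>k<Suc m. if Suc m \<in> g k then 1 else 0) - int (card (g (Suc m)))"
proof -
  have split: "int (card (g k \<inter> {m<..})) = int (card (g k \<inter> {Suc m<..})) + (if Suc m \<in> g k then 1 else 0)" for k
  proof -
    have e: "g k \<inter> {m<..} = (g k \<inter> {Suc m<..}) \<union> (g k \<inter> {Suc m})" by auto
    have "card (g k \<inter> {m<..}) = card (g k \<inter> {Suc m<..}) + card (g k \<inter> {Suc m})"
      unfolding e by (rule card_Un_disjoint) (use fin in auto)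
    thus ?thesis by auto
  qed
  have last: "g (Suc m) \<inter> {Suc m<..} = g (Suc m)" using sub[of "Suc m"] by auto
  have "(\<Sum>k\<le>Suc m. int (card (g k \<inter> {Suc m<..}))) =
        (\<Sum>k\<le>m. int (card (g k \<inter> {Suc m<..}))) + int (card (g (Suc m)))"
    using last by simp
  also have "(\<Sum>k\<le>m. int (card (g k \<inter> {Suc m<..}))) =
       (\<Sum>k\<le>m. int (card (g k \<inter> {m<..}))) - (\<Sum>k\<le>m. if Suc m \<in> g k then 1 else 0)"
    by (simp add: split sum_subtractf[symmetric])
  finally show ?thesis unfolding pc_def using lessThan_Suc_atMost by simp
qed

lemma flowof_in_flow_points:
  assumes sub: "\<And>k. g k \<subseteq> {Suc k<..<n}"
    and infl: "\<And>i. i < n \<Longrightarrow> (\<Sum>k\<le>i. card (g k \<inter> {i<..})) \<le> i + 1"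
  shows "flowof n g \<in> flow_points n (Nvec n)"
proof -
  have fin: "finite (g k)" for k using sub[of k] finite_subset by blast
  have sub': "g k \<subseteq> {Suc k<..}" for k using sub[of k] by auto
  have pcnn: "pc g i \<ge> 0" if "i < n" for i
  proof -
    have "(\<Sum>k\<le>i. int (card (g k \<inter> {i<..}))) = int (\<Sum>k\<le>i. card (g k \<inter> {i<..}))" by simp
    thus ?thesis unfolding pc_def using infl[OF that] by linarith
  qed
  have out: "(\<Sum>j\<in>{i<..n}. flowof n g i j) = int (card (g i)) + pc g i" if "i < n" for i
  proof -
    have "(\<Sum>j\<in>{i<..n}. flowof n g i j) = (\<Sum>j\<in>{i<..n}. (if j \<in> g i then 1 else 0) + (if j = Suc i then pc g i else 0))"
      unfolding flowof_def by (intro sum.cong) auto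
    also have "\<dots> = (\<Sum>j\<in>{i<..n}. (if j \<in> g i then 1 else 0)) + (\<Sum>j\<in>{i<..n}. (if j = Suc i then pc g i else 0))"
      by (rule sum.distrib)
    also have "(\<Sum>j\<in>{i<..n}. (if j \<in> g i then 1 else 0)) = int (card ({i<..n} \<inter> g i))"
      by (rule sum_ind) simp
    also have "{i<..n} \<inter> g i = g i" using sub[of i] by auto
    also have "(\<Sum>j\<in>{i<..n}. (if j = Suc i then pc g i else 0)) = pc g i"
      using that by (simp add: sum.delta)
    finally show ?thesis .
  qed
  have inn: "(\<Sum>k<i. flowof n g k i) = (\<Sum>k<i. if i \<in> g k then 1 else 0) + (if i = 0 then 0 else pc g (i - 1))"
    if "i \<le> n" for i
  proof -
    have "(\<Sum>k<i. flowof n g k i) = (\<Sum>k<i. (if i \<in> g k then 1 else 0) + (if i = Suc k then pc g k else 0))"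
      unfolding flowof_def using that by (intro sum.cong) auto
    also have "\<dots> = (\<Sum>k<i. if i \<in> g k then 1 else 0) + (\<Sum>k<i. if i = Suc k then pc g k else 0)"
      by (rule sum.distrib)
    also have "(\<Sum>k<i. if i = Suc k then pc g k else 0) = (if i = 0 then 0 else pc g (i - 1))"
    proof (cases i)
      case 0 then show ?thesis by simp
    next
      case (Suc m)
      have "(\<Sum>k<i. if i = Suc k then pc g k else 0) = (\<Sum>k<i. if k = m then pc g k else 0)"
        using Suc by (intro sum.cong) auto
      also have "\<dots> = pc g m" using Suc by (simp add: sum.delta)
      finally show ?thesis using Suc by simp
    qed
    finally show ?thesis .
  qed
  show ?thesis unfolding flow_points_def
  proof (intro CollectI conjI allI impI)
    fix i j assume "\<not> (i < j \<and> j \<le> n)" thus "flowof n g i j = 0" unfolding flowof_def by auto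
  next
    fix i j assume ij: "i < j \<and> j \<le> n"
    thus "0 \<le> flowof n g i j" unfolding flowof_def using pcnn[of i] by auto
  next
    fix i assume i: "i \<le> n"
    show "(\<Sum>j\<in>{i<..n}. flowof n g i j) - (\<Sum>k<i. flowof n g k i) = Nvec n i"
    proof (cases "i < n")
      case True
      show ?thesis
      proof (cases i)
        case 0
        then show ?thesis using out[OF True] pc_0[OF sub'] True by (simp add: Nvec_def)
      next
        case (Suc m)
        show ?thesis using out[OF True] inn[OF i] pc_Suc[OF sub' fin, of m] True Suc by (simp add: Nvec_def)
      qed
    next
      case False
      hence ieq: "i = n" using i by auto
      have z: "(\<Sum>k<i. if i \<in> g k then 1 else 0::int) = 0" proof (intro sum.neutral ballI)
        fix k assume "k \<in> {..<i}"
        have "n \<notin> g k" using sub[of k] by auto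
        thus "(if i \<in> g k then 1 else 0::int) = 0" using ieq by simp
      qed
      have "pc g (n - 1) = int n" if "n > 0"
      proof -
        have "(\<Sum>k\<le>n-1. int (card (g k \<inter> {n-1<..}))) = 0"
        proof (intro sum.neutral ballI)
          fix k assume "k \<in> {..n-1}"
          have "g k \<inter> {n-1<..} = {}" using sub[of k] that by fastforce
          thus "int (card (g k \<inter> {n-1<..})) = 0" by simp
        qed
        thus ?thesis unfolding pc_def using that by simp
      qed
      thus ?thesis using inn[OF i] z ieq by (simp add: Nvec_def)
    qed
  qed
qed

lemma flowof_inj:
  assumes "\<And>k. g k \<subseteq> {Suc k<..<n}" "\<And>k. g' k \<subseteq> {Suc k<..<n}" "flowof n g = flowof n g'"
  shows "g = g'"
proof
  fix k
  have "g k = {j. Suc k < j \<and> j \<le> n \<and> flowof n g k j = 1}"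
    if "\<And>k. g k \<subseteq> {Suc k<..<n}" for g :: "nat \<Rightarrow> nat set"
    using that[of k] unfolding flowof_def by auto
  from this[OF assms(1)] this[OF assms(2)] assms(3) show "g k = g' k" by simp
qed


definition Gs :: "nat set \<Rightarrow> (nat \<Rightarrow> nat set) \<Rightarrow> nat \<Rightarrow> nat set" where
  "Gs K \<sigma> k = (if k \<in> K then \<sigma> k else {})"

lemma count_lemma:
  fixes n s h a0 :: nat
  assumes ha: "h * (s + 1) \<le> a0" and an: "a0 + s + 1 \<le> n"
  shows "(s choose h) ^ (n - s - 1 - a0) \<le> c_seq n"
proof -
  define K where "K = {a0..<n-s-1}"
  define W where "W = (\<lambda>k. {S. S \<subseteq> {Suc k<..<k+s+2} \<and> card S = h})"
  define \<Phi> where "\<Phi> = (\<lambda>\<sigma>. flowof n (Gs K \<sigma>))"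
  have sub: "Gs K \<sigma> k \<subseteq> {Suc k<..<n}" if "\<sigma> \<in> PiE K W" for \<sigma> k
  proof (cases "k \<in> K")
    case True
    hence "\<sigma> k \<in> W k" using that by auto
    hence "\<sigma> k \<subseteq> {Suc k<..<k+s+2}" unfolding W_def by auto
    moreover have "k + s + 2 \<le> n" using True an unfolding K_def by auto
    ultimately show ?thesis unfolding Gs_def using True by auto
  qed (simp add: Gs_def)
  have infl: "(\<Sum>k\<le>i. card (Gs K \<sigma> k \<inter> {i<..})) \<le> i + 1" if "\<sigma> \<in> PiE K W" for \<sigma> i
  proof -
    define A where "A = {k. k \<le> i \<and> a0 \<le> k \<and> i - s \<le> k}"
    have t0: "card (Gs K \<sigma> k \<inter> {i<..}) = 0" if "k \<notin> A" "k \<le> i" for k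
    proof (cases "k \<in> K")
      case True
      hence "\<sigma> k \<in> W k" using \<open>\<sigma> \<in> PiE K W\<close> by auto
      hence s1: "\<sigma> k \<subseteq> {Suc k<..<k+s+2}" unfolding W_def by auto
      have "a0 \<le> k" using True unfolding K_def by auto
      hence "k < i - s" using that unfolding A_def by auto
      hence "\<sigma> k \<inter> {i<..} = {}" using s1 by fastforce
      thus ?thesis using True unfolding Gs_def by simp
    qed (simp add: Gs_def)
    have th: "card (Gs K \<sigma> k \<inter> {i<..}) \<le> h" for k
    proof (cases "k \<in> K")
      case True
      hence "\<sigma> k \<in> W k" using \<open>\<sigma> \<in> PiE K W\<close> by auto
      hence "card (\<sigma> k) = h" "finite (\<sigma> k)" unfolding W_def by (auto intro: finite_subset)
      hence "card (\<sigma> k \<inter> {i<..}) \<le> h" using card_mono[of "\<sigma> k" "\<sigma> k \<inter> {i<..}"] by auto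
      thus ?thesis using True unfolding Gs_def by simp
    qed (simp add: Gs_def)
    have "(\<Sum>k\<le>i. card (Gs K \<sigma> k \<inter> {i<..})) = (\<Sum>k\<in>A. card (Gs K \<sigma> k \<inter> {i<..}))"
      by (rule sum.mono_neutral_right) (use t0 in \<open>auto simp: A_def\<close>)
    also have "\<dots> \<le> (\<Sum>k\<in>A. h)" by (rule sum_mono) (rule th)
    also have "\<dots> = card A * h" by simp
    also have "\<dots> \<le> i + 1"
    proof (cases "a0 \<le> i")
      case True
      have "A \<subseteq> {i-s..i}" unfolding A_def by auto
      hence "card A \<le> card {i-s..i}" by (intro card_mono) auto
      also have "\<dots> \<le> s + 1" by simp
      finally have "card A * h \<le> (s+1) * h" by (rule mult_right_mono) simp
      thus ?thesis using ha True by (simp add: mult.commute)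
    next
      case False
      hence "A = {}" unfolding A_def by auto
      thus ?thesis by simp
    qed
    finally show ?thesis .
  qed
  have inmem: "\<Phi> \<sigma> \<in> flow_points n (Nvec n)" if "\<sigma> \<in> PiE K W" for \<sigma>
    unfolding \<Phi>_def
    by (rule flowof_in_flow_points) (use sub[OF that] infl[OF that] in auto)
  have inj: "inj_on \<Phi> (PiE K W)"
  proof (rule inj_onI)
    fix \<sigma> \<sigma>' assume a: "\<sigma> \<in> PiE K W" "\<sigma>' \<in> PiE K W" "\<Phi> \<sigma> = \<Phi> \<sigma>'"
    have "Gs K \<sigma> = Gs K \<sigma>'"
      by (rule flowof_inj[of _ n]) (use sub[OF a(1)] sub[OF a(2)] a(3) in \<open>auto simp: \<Phi>_def\<close>)
    hence "\<sigma> k = \<sigma>' k" if "k \<in> K" for k using that unfolding Gs_def by (metis)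
    thus "\<sigma> = \<sigma>'" using a(1,2) by (intro PiE_ext) auto
  qed
  have cardW: "card (W k) = s choose h" for k
  proof -
    have "card (W k) = card {Suc k<..<k+s+2} choose h" unfolding W_def by (rule n_subsets) simp
    thus ?thesis by simp
  qed
  have "card (PiE K W) = (\<Prod>k\<in>K. card (W k))" by (rule card_PiE) (simp add: K_def)
  also have "\<dots> = (s choose h) ^ card K" by (simp add: cardW)
  also have "card K = n - s - 1 - a0" unfolding K_def by simp
  finally have cP: "card (PiE K W) = (s choose h) ^ (n - s - 1 - a0)" .
  have "card (PiE K W) = card (\<Phi> ` PiE K W)" using inj by (simp add: card_image)
  also have "\<dots> \<le> card (flow_points n (Nvec n))"
    by (rule card_mono) (use finite_flow_points inmem in auto)
  finally show ?thesis using cP unfolding c_seq_def kostant_def by simp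
qed


lemma spec_lemma:
  fixes n q :: nat
  assumes "q * (4*q+1) + 4*q + 1 \<le> n"
  shows "4 ^ (q * (n - 4*q - 1 - q*(4*q+1))) \<le> c_seq n"
proof -
  have b: "4 ^ q \<le> (4*q) choose q"
  proof (cases "q = 0")
    case True then show ?thesis by simp
  next
    case False
    have "(real (4*q) / real q) ^ q \<le> real ((4*q) choose q)"
      by (rule binomial_ge_n_over_k_pow_k) simp
    hence "real (4 ^ q) \<le> real ((4*q) choose q)" using False by simp
    thus ?thesis by linarith
  qed
  have "(4::nat) ^ (q * (n - 4*q - 1 - q*(4*q+1))) = (4^q) ^ (n - 4*q - 1 - q*(4*q+1))"
    by (simp add: power_mult)
  also have "\<dots> \<le> ((4*q) choose q) ^ (n - 4*q - 1 - q*(4*q+1))"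
    by (rule power_mono[OF b]) simp
  also have "\<dots> \<le> c_seq n"
    by (rule count_lemma) (use assms in auto)
  finally show ?thesis .
qed

lemma poly_exp: "q \<ge> 12 \<Longrightarrow> 8*q^2 + 10*q + 3 \<le> (2::nat)^(q-1)"
proof (induction q rule: dec_induct)
  case base then show ?case by simp
next
  case (step m)
  have "8*(Suc m)^2 + 10*(Suc m) + 3 = (8*m^2 + 10*m + 3) + (16*m + 18)" by (simp add: power2_eq_square)
  also have "\<dots> \<le> 2 * (8*m^2 + 10*m + 3)"
  proof -
    have a1: "12*m \<le> m*m" using mult_le_mono1[OF step(1), of m] by simp
    have "16*m + 18 \<le> 96*m" using step(1) by simp
    also have "\<dots> \<le> 8*(m*m)" using a1 by simp
    finally have "8*(m*m) + 10*m + 3 + (16*m+18) \<le> 2*(8*(m*m) + 10*m + 3)" by simp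
    thus ?thesis by (simp only: power2_eq_square)
  qed
  also have "\<dots> \<le> 2 * 2^(m-1)" using step by simp
  also have "\<dots> = 2^(Suc m - 1)" using step(1) by (cases m) auto
  finally show ?case .
qed

lemma part2:
  fixes n :: nat assumes n: "n \<ge> 3000"
  shows "real (n + 1) ^ (n - 1) \<le> real (c_seq n)"
proof -
  obtain q0 where q0: "2^q0 \<le> n+1" "n+1 < 2^(q0+1)" using ex_power_ivl1[of 2 "n+1"] by auto
  define q where "q = q0 + 1"
  have "q \<ge> 12"
  proof (rule ccontr)
    assume "\<not> 12 \<le> q"
    hence "q \<le> 11" by simp
    hence "(2::nat)^q \<le> 2^11" by (intro power_increasing) auto
    thus False using q0(2) n unfolding q_def by simp
  qed
  hence pe: "8*q^2 + 10*q + 3 \<le> n + 1" using poly_exp[of q] q0(1) unfolding q_def by simp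
  define N where "N = n - 4*q - 1 - q*(4*q+1)"
  have cond: "q * (4*q+1) + 4*q + 1 \<le> n" using pe by (simp add: power2_eq_square algebra_simps)
  have N2: "n \<le> 2 * N" using pe unfolding N_def by (simp add: power2_eq_square algebra_simps)
  have "(n+1)^(n-1) \<le> (n+1)^n" by (rule power_increasing) auto
  also have "\<dots> \<le> (2^q)^n" by (rule power_mono) (use q0(2) q_def in auto)
  also have "\<dots> = 2^(q*n)" by (simp add: power_mult)
  also have "\<dots> \<le> 2^(q*(2*N))" by (rule power_increasing) (use N2 in auto)
  also have "\<dots> = 4^(q*N)"
  proof -
    have "q*(2*N) = 2*(q*N)" by simp
    hence "(2::nat)^(q*(2*N)) = (2^2)^(q*N)" by (simp only: power_mult)
    thus ?thesis by simp
  qed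
  also have "\<dots> \<le> c_seq n" unfolding N_def by (rule spec_lemma[OF cond])
  finally have "(n+1)^(n-1) \<le> c_seq n" .
  hence "real ((n+1)^(n-1)) \<le> real (c_seq n)" by linarith
  thus ?thesis by simp
qed

lemma ev_real:
  "\<forall>\<^sub>F x in at_top. (x::real)/4 + 5 * sqrt x / 4 + 1 \<le> x / 2 \<and> 1 \<le> sqrt x / 4 \<and>
      x / 4 * (ln x)^2 \<le> (sqrt x / 4 - 1) * (x / 2) * ln 4"
proof -
  have 1: "\<forall>\<^sub>F x in at_top. (x::real)/4 + 5 * sqrt x / 4 + 1 \<le> x / 2" by real_asymp
  have 2: "\<forall>\<^sub>F x in at_top. 1 \<le> sqrt (x::real) / 4" by real_asymp
  have 3: "\<forall>\<^sub>F x in at_top. (x::real) / 4 * (ln x)^2 \<le> (sqrt x / 4 - 1) * (x / 2) * ln 4" by real_asymp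
  show ?thesis using eventually_conj[OF 1 eventually_conj[OF 2 3]] by simp
qed

lemma part1:
  "\<forall>\<^sub>F n in at_top. real n / 4 * (ln (real n))\<^sup>2 \<le> ln (real (c_seq n))"
proof -
  have ev: "\<forall>\<^sub>F n in sequentially. real n/4 + 5 * sqrt (real n) / 4 + 1 \<le> real n / 2 \<and> 1 \<le> sqrt (real n) / 4 \<and>
      real n / 4 * (ln (real n))^2 \<le> (sqrt (real n) / 4 - 1) * (real n / 2) * ln 4"
    by (rule eventually_compose_filterlim[OF ev_real filterlim_real_sequentially])
  show ?thesis
  proof (rule eventually_mono[OF ev])
    fix n :: nat
    assume a: "real n/4 + 5 * sqrt (real n) / 4 + 1 \<le> real n / 2 \<and> 1 \<le> sqrt (real n) / 4 \<and>
      real n / 4 * (ln (real n))^2 \<le> (sqrt (real n) / 4 - 1) * (real n / 2) * ln 4"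
    define x where "x = real n"
    define q where "q = nat \<lfloor>sqrt x / 4\<rfloor>"
    have sx: "0 \<le> sqrt x" unfolding x_def by simp
    have qle: "real q \<le> sqrt x / 4" unfolding q_def using sx by linarith
    have qge: "sqrt x / 4 - 1 \<le> real q" unfolding q_def using sx by linarith
    have qsq: "real q ^ 2 \<le> x / 16"
    proof -
      have "real q ^ 2 \<le> (sqrt x / 4)^2" by (rule power_mono[OF qle]) simp
      also have "\<dots> = x / 16" unfolding x_def by (simp add: power_divide)
      finally show ?thesis .
    qed
    have "real (4*q^2 + 5*q + 1) \<le> x / 2" using a qsq qle unfolding x_def[symmetric] by simp
    hence r: "real (4*q^2 + 5*q + 1) \<le> x / 2" .
    have "real (4*q^2 + 5*q + 1) \<le> real n" using r sx unfolding x_def by linarith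
    hence "4*q^2 + 5*q + 1 \<le> n" by (simp only: of_nat_le_iff)
    hence cond: "q * (4*q+1) + 4*q + 1 \<le> n"
      by (simp add: power2_eq_square algebra_simps) 
    define N where "N = n - 4*q - 1 - q*(4*q+1)"
    have Neq: "real N = x - real (4*q^2 + 5*q + 1)" unfolding N_def x_def using cond
      by (simp add: power2_eq_square algebra_simps of_nat_diff)
    hence Nge: "x / 2 \<le> real N" using r by simp
    have cpos: "4 ^ (q*N) \<le> c_seq n" unfolding N_def by (rule spec_lemma[OF cond])
    hence "real (4 ^ (q*N)) \<le> real (c_seq n)" by linarith
    moreover have "(0::nat) < 4^(q*N)" by simp
    moreover have "0 < c_seq n" using cpos \<open>(0::nat) < 4^(q*N)\<close> by linarith
    ultimately have "ln (real (4 ^ (q*N))) \<le> ln (real (c_seq n))" by (subst ln_le_cancel_iff) auto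
    moreover have "ln (real (4 ^ (q*N))) = real q * real N * ln 4"
      by (simp add: ln_realpow)
    moreover have "(sqrt x / 4 - 1) * (x / 2) * ln 4 \<le> real q * real N * ln 4"
    proof -
      have "(sqrt x / 4 - 1) * (x / 2) \<le> real q * real N"
        by (rule mult_mono) (use qge Nge a x_def in auto)
      thus ?thesis by simp
    qed
    ultimately show "real n / 4 * (ln (real n))\<^sup>2 \<le> ln (real (c_seq n))"
      using a unfolding x_def by linarith
  qed
qed

theorem theorem1p2:
  shows "(\<exists>C::real. \<forall>\<^sub>F n in at_top.
            ln (real (c_seq n)) \<ge> real n / 4 * (ln (real n))\<^sup>2 - C * (real n * ln (real n)))
       \<and> (\<forall>n\<ge>3000. real (c_seq n) \<ge> real (n + 1) ^ (n - 1))"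
proof
  show "\<exists>C::real. \<forall>\<^sub>F n in at_top.
            ln (real (c_seq n)) \<ge> real n / 4 * (ln (real n))\<^sup>2 - C * (real n * ln (real n))"
    by (rule exI[of _ 0]) (use part1 in simp)
  show "\<forall>n\<ge>3000. real (c_seq n) \<ge> real (n + 1) ^ (n - 1)" using part2 by blast
qed

end
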